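(* Let $\Sigma\subset(0,\infty)$ be an unbounded set of parameters $\sigma$, and for each $\sigma\in\Sigma$ let $N_\sigma$ be a positive integer and $\mu_\sigma\in(0,1)$ be such that $\sigma=\sqrt{N_\sigma\mu_\sigma(1-\mu_\sigma)}$. Put $E_\sigma=N_\sigma\mu_\sigma$, and for real $x$ put $m(\sigma,x)=E_\sigma-\sigma x$ and $n(\sigma,x)=N_\sigma-m(\sigma,x)$. Define (for $\sigma$ large enough) $$b(\sigma,x)=\frac{\Gamma(N_\sigma+1)}{\Gamma(n(\sigma,x)+1)\,\Gamma(m(\sigma,x)+1)}\,\mu_\sigma^{m(\sigma,x)}(1-\mu_\sigma)^{n(\sigma,x)}.$$ Assume that $E_\sigma=\sigma^2+1+O(1/\sigma^2)$ as $\sigma\to\infty$, and let $\alpha>0$ be fixed. Then on the intervals $I_\sigma=[-\sigma^{1-\alpha},\sigma^{1-\alpha}]$ we have $$b(\sigma,x)=\Big(\frac{1}{\sqrt{2\pi}}e^{-x^2/2}\Big)\frac{1}{\sigma}-\Big(\frac{1}{6\sqrt{2\pi}}x(x^2-3)e^{-x^2/2}\Big)\frac{1}{\sigma^2}+O\Big(\frac{1}{\sigma^3}\Big),$$ where the $O$ is uniform in $x\in I_\sigma$: there exist $C>0$ and $\sigma_0$ such that the absolute value of the difference between $b(\sigma,x)$ and the two main terms is at most $C/\sigma^3$ for all $\sigma\in\Sigma$ with $\sigma>\sigma_0$ and all $x\in I_\sigma$.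
   Context: Here $b(\sigma,\cdot)$ is the continuous interpolation of the binomial mass function: when $m(\sigma,x)$ is an integer, $b(\sigma,x)$ equals the probability that a binomial random variable with $N_\sigma$ trials and success probability $\mu_\sigma$ takes the value $m(\sigma,x)$. *)

theory Defs
  imports "HOL-Analysis.Analysis"
begin

definition bin_interp :: "nat \<Rightarrow> real \<Rightarrow> real \<Rightarrow> real \<Rightarrow> real" where
  "bin_interp N mu sg x =
     (let E = real N * mu; m = E - sg * x; n = real N - m in
      Gamma (real N + 1) / (Gamma (n + 1) * Gamma (m + 1)) * mu powr m * (1 - mu) powr n)"

end

theory Submission
  imports Defs "HOL-Real_Asymp.Real_Asymp"
begin


lemma ln_ratio_lower:
  fixes t :: real assumes "0 \<le> t" "t < 1"
  shows "2*t \<le> ln (1+t) - ln (1-t)"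
proof -
  let ?f = "\<lambda>u::real. ln (1+u) - ln (1-u) - 2*u"
  have "?f 0 \<le> ?f t"
  proof (rule DERIV_nonneg_imp_nondecreasing[OF assms(1)])
    fix u assume u: "0 \<le> u" "u \<le> t"
    have "DERIV ?f u :> (1/(1+u) - (-1)/(1-u) - 2)"
      using u assms by (auto intro!: derivative_eq_intros)
    moreover have "1/(1+u) - (-1)/(1-u) - 2 \<ge> 0"
    proof -
      have uu: "u*u < 1" using u assms mult_left_le_one_le[of u u] by linarith
      have "1/(1+u) - (-1)/(1-u) - 2 = 2*u^2/((1+u)*(1-u))"
        using u assms uu by (simp add: field_simps power2_eq_square)
      also have "\<dots> \<ge> 0" using u assms by simp
      finally show ?thesis .
    qed
    ultimately show "\<exists>y. DERIV ?f u :> y \<and> y \<ge> 0" by blast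
  qed
  thus ?thesis by simp
qed

lemma aux1: fixes u p q::real assumes "p = 1-u" "q = 1+u" "p \<noteq> 0" "q\<noteq>0"
  shows "(2 + ((2*(3*u^2)) * (3*(p*q)) - 2*u^3*(3*(0 - 2*u))) / (3*(p*q))^2
           - (1/q - (-1)/p)) = 4*u^4/(3*(p*q)^2)"
proof -
  have "(2 + ((2*(3*u^2)) * (3*(p*q)) - 2*u^3*(3*(0 - 2*u))) / (3*(p*q))^2
           - (1/q - (-1)/p)) * (9*(p*q)^2) = 4*u^4/(3*(p*q)^2) * (9*(p*q)^2)"
    using assms(3,4) by (simp add: field_simps power2_eq_square) (simp add: assms(1,2) algebra_simps power2_eq_square power3_eq_cube power4_eq_xxxx)
  moreover have "9*(p*q)^2 \<noteq> 0" using assms(3,4) by simp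
  ultimately show ?thesis using mult_right_cancel by blast
qed

lemma ln_ratio_upper:
  fixes t :: real assumes "0 \<le> t" "t < 1"
  shows "ln (1+t) - ln (1-t) \<le> 2*t + 2*t^3/(3*(1-t^2))"
proof -
  let ?f = "\<lambda>u::real. 2*u + 2*u^3/(3*(1-u^2)) - (ln (1+u) - ln (1-u))"
  have "?f 0 \<le> ?f t"
  proof (rule DERIV_nonneg_imp_nondecreasing[OF assms(1)])
    fix u assume u: "0 \<le> u" "u \<le> t"
    have nz: "1 - u^2 \<noteq> 0" "3*(1-u^2) \<noteq> 0" using u assms
      proof -
      have "u*u < 1" using u assms mult_left_le_one_le[of u u] by linarith
      hence "u^2 < 1" by (simp add: power2_eq_square)
      thus "1 - u^2 \<noteq> 0" "3*(1-u^2) \<noteq> 0" by auto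
    qed
    have D: "DERIV ?f u :> (2 + ((2*(3*u^2)) * (3*(1-u^2)) - 2*u^3*(3*(0 - 2*u))) / (3*(1-u^2))^2
           - (1/(1+u) - (-1)/(1-u)))"
      using u assms nz by (auto intro!: derivative_eq_intros simp: power2_eq_square)
    have eq: "(2 + ((2*(3*u^2)) * (3*(1-u^2)) - 2*u^3*(3*(0 - 2*u))) / (3*(1-u^2))^2
           - (1/(1+u) - (-1)/(1-u))) = 4*u^4/(3*(1-u^2)^2)"
    proof -
      have e: "1 - u^2 = (1-u)*(1+u)" by (simp add: algebra_simps power2_eq_square)
      have "1-u \<noteq> 0" "1+u \<noteq> 0" using u assms by auto
      then show ?thesis unfolding e by (intro aux1) auto
    qed
    have nn: "4*u^4/(3*(1-u^2)^2) \<ge> 0" by simp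
    from D have "DERIV ?f u :> 4*u^4/(3*(1-u^2)^2)" unfolding eq .
    with nn show "\<exists>y. DERIV ?f u :> y \<and> y \<ge> 0" by blast
  qed
  thus ?thesis by simp
qed



lemma aux2: fixes z :: real assumes z: "z>0"
  shows "(1/(2*z+1))^2/(3*(1-(1/(2*z+1))^2)) = 1/(12*z) - 1/(12*(z+1))"
proof -
  define w where "w = 2*z+1"
  have w: "w > 1" using z by (simp add: w_def)
  have a: "1 - (1/w)^2 = (w^2-1)/w^2" using w by (simp add: field_simps)
  have b: "w^2 - 1 > 0" using w by (simp add: one_less_power)
  have c: "(1/w)^2/(3*((w^2-1)/w^2)) = 1/(3*(w^2-1))" using w b by (simp add: field_simps power2_eq_square)
  have d: "w^2 - 1 = 4*z*(z+1)" by (simp add: w_def power2_eq_square algebra_simps)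
  have e: "1/(12*z) - 1/(12*(z+1)) = 1/(12*z*(z+1))" using z by (simp add: field_simps)
  show ?thesis unfolding w_def[symmetric] a c d e using w by (simp add: power_divide)
qed

lemma d_bounds:
  fixes z :: real assumes z: "z > 0"
  shows "0 \<le> (z+1/2)*ln(1+1/z) - 1" "(z+1/2)*ln(1+1/z) - 1 \<le> 1/(12*z) - 1/(12*(z+1))"
proof -
  define t where "t = 1/(2*z+1)"
  have t0: "0 < t" "t < 1" using z by (auto simp: t_def field_simps)
  have a1: "1 - t = 2*z/(2*z+1)" "1+t = (2*z+2)/(2*z+1)" proof -
    have n: "2*z+1 \<noteq> 0" using z by simp
    show "1 - t = 2*z/(2*z+1)" unfolding t_def using n by (simp add: field_simps)
    show "1 + t = (2*z+2)/(2*z+1)" unfolding t_def using n by (simp add: field_simps)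
  qed
  have n: "2*z+1 > 0" using z by simp
  have "(1+t)/(1-t) = ((2*z+2)/(2*z+1)) / (2*z/(2*z+1))" unfolding a1 ..
  also have "\<dots> = (2*z+2)/(2*z)" using n by (simp add: divide_simps)
  also have "\<dots> = 1 + 1/z" using z by (simp add: field_simps)
  finally have "1 + 1/z = (1+t)/(1-t)" ..
  hence L: "ln (1+1/z) = ln (1+t) - ln (1-t)" using t0 by (simp add: ln_div)
  have Z: "z + 1/2 = 1/(2*t)" using z by (simp add: t_def field_simps)
  have lo: "2*t \<le> ln (1+t) - ln (1-t)" using ln_ratio_lower t0 by auto
  have hi: "ln (1+t) - ln (1-t) \<le> 2*t + 2*t^3/(3*(1-t^2))" using ln_ratio_upper t0 by auto
  show "0 \<le> (z+1/2)*ln(1+1/z) - 1"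
  proof -
    have "(z+1/2)*ln(1+1/z) = (ln (1+t) - ln (1-t)) / (2*t)" unfolding L Z by simp
    also have "\<dots> \<ge> (2*t)/(2*t)" using lo t0 by (intro divide_right_mono) auto
    finally show ?thesis using t0 by simp
  qed
  have tt: "t^2 < 1" using t0 by (simp add: power_less_one_iff)
  have "(z+1/2)*ln(1+1/z) = (ln (1+t) - ln (1-t)) / (2*t)" unfolding L Z by simp
  also have "\<dots> \<le> (2*t + 2*t^3/(3*(1-t^2)))/(2*t)" using hi t0 by (intro divide_right_mono) auto
  also have "\<dots> = 1 + t^2/(3*(1-t^2))" using t0 tt by (simp add: field_simps power2_eq_square power3_eq_cube)
  also have "t^2/(3*(1-t^2)) = 1/(12*z) - 1/(12*(z+1))"
    unfolding t_def by (rule aux2[OF z])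
  finally show "(z+1/2)*ln(1+1/z) - 1 \<le> 1/(12*z) - 1/(12*(z+1))" by simp
qed

definition G0 :: "real \<Rightarrow> real" where
  "G0 z = ln (Gamma z) - (z - 1/2) * ln z + z"

lemma ln_Gamma_plus1: fixes z :: real assumes "z > 0"
  shows "ln (Gamma (z+1)) = ln z + ln (Gamma z)"
proof -
  have "z \<notin> \<int>\<^sub>\<le>\<^sub>0" using assms by (auto elim!: nonpos_Ints_cases)
  hence "Gamma (z+1) = z * Gamma z" by (rule Gamma_plus1)
  moreover have g: "Gamma z > 0" using Gamma_real_pos[OF assms] .
  hence g': "Gamma z \<noteq> 0" by simp
  ultimately show ?thesis using g' assms by (simp add: ln_mult)
qed

lemma G0_step: fixes z :: real assumes z: "z > 0"
  shows "G0 z - G0 (z+1) = (z+1/2)*ln(1+1/z) - 1"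
proof -
  have L: "ln (1+1/z) = ln (z+1) - ln z" using z by (simp add: field_simps ln_div)
  have A: "ln (Gamma (z+1)) = ln z + ln (Gamma z)" by (rule ln_Gamma_plus1[OF z])
  have B: "(z+1/2)*ln(1+1/z) = (z+1/2)*ln(z+1) - (z+1/2)*ln z" by (simp only: L) (simp add: algebra_simps)
  show ?thesis unfolding G0_def using A B by (simp add: algebra_simps)
qed

lemma G0_tele: fixes z :: real assumes z: "z > 0"
  shows "0 \<le> G0 z - G0 (z + real k) \<and> G0 z - G0 (z + real k) \<le> 1/(12*z) - 1/(12*(z + real k))"
proof (induction k)
  case 0 thus ?case by simp
next
  case (Suc k)
  have zk: "z + real k > 0" using z by simp
  have s: "G0 (z + real k) - G0 (z + real k + 1) = (z + real k + 1/2)*ln(1+1/(z+real k)) - 1"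
    using G0_step[OF zk] by simp
  from d_bounds[OF zk] s Suc.IH show ?case by (simp add: algebra_simps)
qed

lemma G0_limit_exists: fixes z :: real assumes z: "z > 0"
  shows "\<exists>L. (\<lambda>k. G0 (z + real k)) \<longlonglongrightarrow> L \<and> G0 z - 1/(12*z) \<le> L \<and> L \<le> G0 z"
proof -
  have dec: "decseq (\<lambda>k. G0 (z + real k))"
  proof (rule decseq_SucI)
    fix k
    have zk: "z + real k > 0" using z by simp
    have e: "z + real (Suc k) = (z + real k) + 1" by simp
    show "G0 (z + real (Suc k)) \<le> G0 (z + real k)"
      unfolding e using G0_step[OF zk] d_bounds(1)[OF zk] by linarith
  qed
  have lb: "\<forall>k. G0 z - 1/(12*z) \<le> G0 (z + real k)"
  proof
    fix k
    have "1/(12*(z + real k)) \<ge> 0" using z by simp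
    with G0_tele[OF z, of k] show "G0 z - 1/(12*z) \<le> G0 (z + real k)" by linarith
  qed
  from decseq_convergent[OF dec lb] obtain L where L: "(\<lambda>k. G0 (z + real k)) \<longlonglongrightarrow> L"
     "\<forall>i. L \<le> G0 (z + real i)" by blast
  have "G0 z - 1/(12*z) \<le> L"
    by (rule LIMSEQ_le_const[OF L(1)]) (use lb in auto)
  moreover have "L \<le> G0 z" using L(2)[rule_format, of 0] by simp
  ultimately show ?thesis using L(1) by blast
qed



lemma not_nonpos_Int_pos: fixes z :: real shows "z > 0 \<Longrightarrow> z \<notin> \<int>\<^sub>\<le>\<^sub>0"
  by (auto elim!: nonpos_Ints_cases)

lemma Gamma_ratio_lim: fixes z :: real assumes z: "z > 0"
  shows "(\<lambda>n. ln (fact n) + z * ln (real n) - ln (Gamma (z + real (Suc n)))) \<longlonglongrightarrow> 0"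
proof -
  have nz: "z \<notin> \<int>\<^sub>\<le>\<^sub>0" by (rule not_nonpos_Int_pos[OF z])
  have gz: "Gamma z > 0" using Gamma_real_pos[OF z] .
  have gz': "Gamma z \<noteq> 0" using gz by simp
  have "(\<lambda>n. Gamma_series z n / Gamma z) \<longlonglongrightarrow> Gamma z / Gamma z"
    by (intro tendsto_intros Gamma_series_LIMSEQ gz')
  with gz' have Q: "(\<lambda>n. Gamma_series z n / Gamma z) \<longlonglongrightarrow> 1" by simp
  have eq: "Gamma_series z n / Gamma z = fact n * exp (z * ln (real n)) / Gamma (z + real (Suc n))" for n
  proof -
    have "pochhammer z (n+1) = Gamma (z + real (n+1)) / Gamma z" using pochhammer_Gamma[OF nz] by simp
    moreover have "Gamma (z + real (Suc n)) > 0" using z by (intro Gamma_real_pos) simp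
    ultimately show ?thesis unfolding Gamma_series_def using gz by (simp add: field_simps)
  qed
  have Q2: "(\<lambda>n. fact n * exp (z * ln (real n)) / Gamma (z + real (Suc n))) \<longlonglongrightarrow> 1"
    using Q unfolding eq .
  have "(\<lambda>n. ln (fact n * exp (z * ln (real n)) / Gamma (z + real (Suc n)))) \<longlonglongrightarrow> ln 1"
    by (rule tendsto_ln[OF Q2]) simp
  hence L: "(\<lambda>n. ln (fact n * exp (z * ln (real n)) / Gamma (z + real (Suc n)))) \<longlonglongrightarrow> 0" by simp
  show ?thesis
  proof (rule Lim_transform_eventually[OF L])
    show "\<forall>\<^sub>F n in sequentially. ln (fact n * exp (z * ln (real n)) / Gamma (z + real (Suc n))) =
        ln (fact n) + z * ln (real n) - ln (Gamma (z + real (Suc n)))"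
    proof (rule always_eventually, rule allI)
      fix n
      have g: "Gamma (z + real (Suc n)) > 0" using z by (intro Gamma_real_pos) simp
      have f: "(fact n :: real) > 0" by simp
      show "ln (fact n * exp (z * ln (real n)) / Gamma (z + real (Suc n))) =
        ln (fact n) + z * ln (real n) - ln (Gamma (z + real (Suc n)))"
        using g f by (simp add: ln_div ln_mult)
    qed
  qed
qed

lemma G0_shift_diff: fixes z :: real assumes z: "z > 0"
  shows "(\<lambda>n. G0 (z + real (Suc n)) - G0 (1 + real n)) \<longlonglongrightarrow> 0"
proof -
  have B: "(\<lambda>n::nat. z * ln (real n) - (z + real n + 1/2) * ln (z + real n + 1) + (real n + 1/2) * ln (real n + 1) + z) \<longlonglongrightarrow> 0"
    using z by real_asymp
  have "(\<lambda>n. -(ln (fact n) + z * ln (real n) - ln (Gamma (z + real (Suc n))))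
       + (z * ln (real n) - (z + real n + 1/2) * ln (z + real n + 1) + (real n + 1/2) * ln (real n + 1) + z)) \<longlonglongrightarrow> -0 + 0"
    by (intro tendsto_intros Gamma_ratio_lim[OF z] B)
  hence C: "(\<lambda>n. -(ln (fact n) + z * ln (real n) - ln (Gamma (z + real (Suc n))))
       + (z * ln (real n) - (z + real n + 1/2) * ln (z + real n + 1) + (real n + 1/2) * ln (real n + 1) + z)) \<longlonglongrightarrow> 0"
    by simp
  show ?thesis
  proof (rule Lim_transform_eventually[OF C], rule always_eventually, rule allI)
    fix n
    have "Gamma (1 + real n) = (fact n :: real)" by (rule Gamma_fact)
    hence f: "ln (fact n) = ln (Gamma (1 + real n))" by simp
    have e1: "z + real (Suc n) = z + real n + 1" by simp
    show "-(ln (fact n) + z * ln (real n) - ln (Gamma (z + real (Suc n))))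
       + (z * ln (real n) - (z + real n + 1/2) * ln (z + real n + 1) + (real n + 1/2) * ln (real n + 1) + z)
       = G0 (z + real (Suc n)) - G0 (1 + real n)"
      unfolding G0_def f e1 by (simp add: algebra_simps)
  qed
qed

lemma G0_limit_indep: fixes z :: real assumes z: "z > 0"
  and Lz: "(\<lambda>k. G0 (z + real k)) \<longlonglongrightarrow> Lz" and L1: "(\<lambda>k. G0 (1 + real k)) \<longlonglongrightarrow> L1"
  shows "Lz = L1"
proof -
  have "(\<lambda>n. G0 (z + real (Suc n)) - G0 (1 + real n)) \<longlonglongrightarrow> Lz - L1"
    by (intro tendsto_intros LIMSEQ_Suc[OF Lz] L1)
  with G0_shift_diff[OF z] have "Lz - L1 = 0" using LIMSEQ_unique by blast
  thus ?thesis by simp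
qed

lemma Gamma_dup_real: fixes z :: real assumes z: "z > 0"
  shows "Gamma z * Gamma (z + 1/2) = exp ((1 - 2*z) * ln 2) * sqrt pi * Gamma (2*z)"
proof -
  have "complex_of_real z \<notin> \<int>\<^sub>\<le>\<^sub>0" using z by (auto elim!: nonpos_Ints_cases simp: complex_eq_iff)
  moreover have "complex_of_real z + 1/2 \<notin> \<int>\<^sub>\<le>\<^sub>0"
  proof -
    have "complex_of_real z + 1/2 = complex_of_real (z + 1/2)" by simp
    moreover have "z + 1/2 > 0" using z by simp
    ultimately show ?thesis by (auto elim!: nonpos_Ints_cases simp: complex_eq_iff)
  qed
  ultimately have "Gamma (complex_of_real z) * Gamma (complex_of_real z + 1/2) =
             exp ((1 - 2*complex_of_real z) * of_real (ln 2)) * of_real (sqrt pi) * Gamma (2*complex_of_real z)"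
    by (rule Gamma_legendre_duplication)
  also have "complex_of_real z + 1/2 = complex_of_real (z + 1/2)" by simp
  also have "(1 - 2*complex_of_real z) * of_real (ln 2) = complex_of_real ((1-2*z) * ln 2)" by simp
  also have "2*complex_of_real z = complex_of_real (2*z)" by simp
  finally have "complex_of_real (Gamma z) * complex_of_real (Gamma (z + 1/2)) = complex_of_real (exp ((1 - 2*z) * ln 2)) * complex_of_real (sqrt pi) * complex_of_real (Gamma (2*z))"
    by (simp only: Gamma_complex_of_real exp_of_real)
  hence "complex_of_real (Gamma z * Gamma (z + 1/2)) = complex_of_real (exp ((1 - 2*z) * ln 2) * sqrt pi * Gamma (2*z))"
    by (simp only: of_real_mult)
  thus ?thesis by (simp only: of_real_eq_iff)
qed



lemma dup_identity: fixes n :: real assumes n: "n > 0"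
  shows "G0 n + G0 (n + 1/2) - G0 (2*n) = ln 2/2 + ln pi/2 + n * ln n - n * ln (n + 1/2) + 1/2"
proof -
  have g1: "Gamma n > 0" "Gamma (n+1/2) > 0" "Gamma (2*n) > 0" using n by (auto intro!: Gamma_real_pos)
  have "ln (Gamma n * Gamma (n + 1/2)) = ln (exp ((1 - 2*n) * ln 2) * sqrt pi * Gamma (2*n))"
    using Gamma_dup_real[OF n] by simp
  hence D: "ln (Gamma n) + ln (Gamma (n+1/2)) = (1 - 2*n) * ln 2 + ln pi / 2 + ln (Gamma (2*n))"
    using g1 by (simp add: ln_mult ln_sqrt)
  have l2: "ln (2*n) = ln 2 + ln n" using n by (simp add: ln_mult)
  show ?thesis unfolding G0_def l2 using D by (simp add: algebra_simps)
qed

lemma G0_lim_const: fixes z :: real assumes z: "z > 0"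
  shows "(\<lambda>k. G0 (z + real k)) \<longlonglongrightarrow> ln (2*pi)/2"
proof -
  obtain L1 where L1: "(\<lambda>k. G0 (1 + real k)) \<longlonglongrightarrow> L1" using G0_limit_exists[of 1] by auto
  obtain Lh where Lh: "(\<lambda>k. G0 (1/2 + real k)) \<longlonglongrightarrow> Lh" using G0_limit_exists[of "1/2"] by auto
  have hh: "Lh = L1" by (rule G0_limit_indep[OF _ Lh L1]) simp
  have B: "(\<lambda>k. G0 (1/2 + real (Suc k))) \<longlonglongrightarrow> L1" using LIMSEQ_Suc[OF Lh] hh by simp
  have sm: "strict_mono (\<lambda>k::nat. 2*k+1)" by (rule strict_monoI) simp
  have C: "(\<lambda>k. G0 (1 + real (2*k+1))) \<longlonglongrightarrow> L1"
    using LIMSEQ_subseq_LIMSEQ[OF L1 sm] by (simp add: comp_def)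
  have D: "(\<lambda>k. G0 (1 + real k) + G0 (1/2 + real (Suc k)) - G0 (1 + real (2*k+1))) \<longlonglongrightarrow> L1 + L1 - L1"
    by (intro tendsto_intros L1 B C)
  have F: "(\<lambda>k::nat. ln 2/2 + ln pi/2 + (real k + 1) * ln (real k + 1) - (real k + 1) * ln (real k + 1 + 1/2) + 1/2)
            \<longlonglongrightarrow> ln 2/2 + ln pi/2"
    by real_asymp
  have E: "G0 (1 + real k) + G0 (1/2 + real (Suc k)) - G0 (1 + real (2*k+1)) =
     ln 2/2 + ln pi/2 + (real k + 1) * ln (real k + 1) - (real k + 1) * ln (real k + 1 + 1/2) + 1/2" for k
  proof -
    have a: "1 + real k = real k + 1" "1/2 + real (Suc k) = (real k + 1) + 1/2" "1 + real (2*k+1) = 2*(real k + 1)"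
      by simp_all
    show ?thesis unfolding a by (rule dup_identity) simp
  qed
  have "L1 + L1 - L1 = ln 2/2 + ln pi/2"
    using D F unfolding E using LIMSEQ_unique by blast
  hence c: "L1 = ln (2*pi)/2" by (simp add: ln_mult)
  obtain Lz where Lz: "(\<lambda>k. G0 (z + real k)) \<longlonglongrightarrow> Lz" using G0_limit_exists[OF z] by auto
  have "Lz = L1" by (rule G0_limit_indep[OF z Lz L1])
  with Lz c show ?thesis by simp
qed

lemma stirling_bound: fixes z :: real assumes z: "z > 0"
  shows "0 \<le> ln (Gamma (z+1)) - ((z+1/2)*ln z - z + ln (2*pi)/2)"
    and "ln (Gamma (z+1)) - ((z+1/2)*ln z - z + ln (2*pi)/2) \<le> 1/(12*z)"
proof -
  obtain L where L: "(\<lambda>k. G0 (z + real k)) \<longlonglongrightarrow> L" "G0 z - 1/(12*z) \<le> L" "L \<le> G0 z"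
    using G0_limit_exists[OF z] by auto
  have "L = ln (2*pi)/2" using LIMSEQ_unique[OF L(1) G0_lim_const[OF z]] .
  moreover have "ln (Gamma (z+1)) - ((z+1/2)*ln z - z + ln (2*pi)/2) = G0 z - ln (2*pi)/2"
    unfolding G0_def ln_Gamma_plus1[OF z] by (simp add: algebra_simps)
  ultimately show "0 \<le> ln (Gamma (z+1)) - ((z+1/2)*ln z - z + ln (2*pi)/2)"
    and "ln (Gamma (z+1)) - ((z+1/2)*ln z - z + ln (2*pi)/2) \<le> 1/(12*z)" using L by linarith+
qed



lemma der1: "1 + t \<noteq> (0::real) \<Longrightarrow> DERIV (\<lambda>t. 1/(1+t)) t :> -1/((1+t)^2)"
  by (auto intro!: derivative_eq_intros simp: field_simps) algebra
lemma der2: "1 + t \<noteq> (0::real) \<Longrightarrow> DERIV (\<lambda>t. -1/((1+t)^2)) t :> 2/((1+t)^3)"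
  by (auto intro!: derivative_eq_intros simp: field_simps) algebra
lemma der3: "1 + t \<noteq> (0::real) \<Longrightarrow> DERIV (\<lambda>t. 2/((1+t)^3)) t :> -6/((1+t)^4)"
  by (auto intro!: derivative_eq_intros simp: field_simps)

lemma ln_taylor:
  fixes u :: real assumes u: "\<bar>u\<bar> \<le> 1/2"
  shows "\<bar>ln (1+u) - (u - u^2/2 + u^3/3)\<bar> \<le> 4*u^4"
proof -
  define diff :: "nat \<Rightarrow> real \<Rightarrow> real" where
    "diff = (\<lambda>m t. if m = 0 then ln (1+t) else if m = 1 then 1/(1+t) else if m = 2 then -1/((1+t)^2)
              else if m = 3 then 2/((1+t)^3) else -6/((1+t)^4))"
  have D: "\<forall>m t. m < 4 \<and> \<bar>t\<bar> \<le> \<bar>u\<bar> \<longrightarrow> DERIV (diff m) t :> diff (Suc m) t"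
  proof (intro allI impI)
    fix m :: nat and t :: real assume mt: "m < 4 \<and> \<bar>t\<bar> \<le> \<bar>u\<bar>"
    hence t: "1 + t > 0" using u by linarith
    hence t': "1 + t \<noteq> 0" by simp
    from mt have "m = 0 \<or> m = 1 \<or> m = 2 \<or> m = 3" by auto
    thus "DERIV (diff m) t :> diff (Suc m) t"
    proof (elim disjE)
      assume "m = 0" thus ?thesis unfolding diff_def using t by (auto intro!: derivative_eq_intros)
    next
      assume "m = 1" thus ?thesis unfolding diff_def using der1[OF t'] by simp
    next
      assume "m = 2" thus ?thesis unfolding diff_def using der2[OF t'] by simp
    next
      assume "m = 3" thus ?thesis unfolding diff_def using der3[OF t'] by simp
    qed
  qed
  have d0: "diff 0 = (\<lambda>u. ln (1+u))" unfolding diff_def by simp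
  from Maclaurin_bi_le[OF d0 D] obtain t where t: "\<bar>t\<bar> \<le> \<bar>u\<bar>"
    and eq: "ln (1+u) = (\<Sum>m<4. diff m 0 / fact m * u ^ m) + diff 4 t / fact 4 * u ^ 4" by blast
  have s: "(\<Sum>m<4. diff m 0 / fact m * u ^ m) = u - u^2/2 + u^3/3"
    by (simp add: diff_def eval_nat_numeral fact_numeral)
  have t1: "1 + t \<ge> 1/2" using t u by linarith
  have "(1/2)^4 \<le> (1+t)^4" by (rule power_mono[OF t1]) simp
  hence p: "(1+t)^4 \<ge> 1/16" by (simp add: power_divide)
  have r: "diff 4 t / fact 4 * u ^ 4 = - (u^4 / (4 * (1+t)^4))"
    by (simp add: diff_def fact_numeral)
  have "u^4 / (4 * (1+t)^4) \<le> u^4 / (4 * (1/16))"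
    using p by (intro divide_left_mono) auto
  moreover have "u^4 / (4 * (1+t)^4) \<ge> 0" using p by simp
  ultimately show ?thesis using eq s r by simp
qed

lemma ln_taylor1:
  fixes u :: real assumes u: "\<bar>u\<bar> \<le> 1/2"
  shows "\<bar>ln (1+u) - u\<bar> \<le> 2*u^2"
proof -
  have a: "\<bar>u\<bar>^3 \<le> u^2 * (1/2)"
  proof -
    have "\<bar>u\<bar>^3 = \<bar>u\<bar> * u^2" by (simp add: power3_eq_cube power2_eq_square abs_mult[symmetric])
    also have "\<dots> \<le> (1/2) * u^2" using u by (intro mult_right_mono) auto
    finally show ?thesis by simp
  qed
  have b: "u^4 \<le> u^2 * (1/4)"
  proof -
    have "\<bar>u\<bar>^2 \<le> (1/2)^2" using u by (intro power_mono) auto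
    hence u2: "u^2 \<le> 1/4" by (simp add: power_divide)
    have "u^2 * u^2 \<le> u^2 * (1/4)" using u2 by (intro mult_left_mono) auto
    thus ?thesis by (simp add: power4_eq_xxxx power2_eq_square mult.assoc)
  qed
  have c: "\<bar>u^3\<bar> = \<bar>u\<bar>^3" by (simp add: power_abs)
  have d: "0 \<le> u^2" by simp
  show ?thesis using ln_taylor[OF u] a b c d abs_ge_self[of "u^3"] abs_ge_minus_self[of "u^3"]
    unfolding abs_le_iff by linarith
qed

lemma ln_taylor2:
  fixes u :: real assumes u: "\<bar>u\<bar> \<le> 1/2"
  shows "\<bar>ln (1+u) - (u - u^2/2)\<bar> \<le> 3*\<bar>u\<bar>^3"
proof -
  have b: "u^4 \<le> \<bar>u\<bar>^3 * (1/2)"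
  proof -
    have "u^4 = \<bar>u\<bar>^3 * \<bar>u\<bar>" by (simp add: power_abs[symmetric] power4_eq_xxxx power3_eq_cube)
    also have "\<dots> \<le> \<bar>u\<bar>^3 * (1/2)" using u by (intro mult_left_mono) auto
    finally show ?thesis .
  qed
  have c: "\<bar>u^3\<bar> = \<bar>u\<bar>^3" by (simp add: power_abs)
  show ?thesis using ln_taylor[OF u] b c abs_ge_self[of "u^3"] abs_ge_minus_self[of "u^3"]
    unfolding abs_le_iff by linarith
qed

lemma exp_taylor1: fixes y :: real shows "\<bar>exp y - 1 - y\<bar> \<le> y^2 * exp \<bar>y\<bar>"
proof -
  have d0: "(\<lambda>n::nat. exp) 0 = exp" by simp
  have D: "\<forall>m t. m < 2 \<and> \<bar>t\<bar> \<le> \<bar>y\<bar> \<longrightarrow> DERIV ((\<lambda>n::nat. exp) m) t :> (\<lambda>n::nat. exp) (Suc m) t"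
    by (auto intro!: derivative_eq_intros)
  from Maclaurin_bi_le[OF d0 D] obtain t where t: "\<bar>t\<bar> \<le> \<bar>y\<bar>"
    and eq: "exp y = (\<Sum>m<2. exp 0 / fact m * y ^ m) + exp t / fact 2 * y ^ 2" by blast
  have eq2: "exp y - 1 - y = exp t / 2 * y^2" using eq by (simp add: eval_nat_numeral)
  have "exp t \<le> exp \<bar>y\<bar>" using t by simp
  hence "exp t / 2 \<le> exp \<bar>y\<bar>" using exp_gt_zero[of "\<bar>y\<bar>"] exp_gt_zero[of t] by linarith
  hence B: "exp t / 2 * y^2 \<le> exp \<bar>y\<bar> * y^2" by (rule mult_right_mono) simp
  have nn: "exp t / 2 * y^2 \<ge> 0" by simp
  have A: "\<bar>exp y - 1 - y\<bar> = exp t / 2 * y^2" unfolding eq2 using nn by (rule abs_of_nonneg)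
  have "\<bar>exp y - 1 - y\<bar> \<le> exp \<bar>y\<bar> * y^2" using A B by linarith
  thus ?thesis by (simp add: mult.commute)
qed

lemma poly_exp_bound: fixes x :: real shows "(1 + x^2)^4 \<le> 65536 * exp (x^2/4)"
proof -
  have a: "1 + x^2 \<le> 16 * exp (x^2/16)"
  proof -
    have "1 + x^2/16 \<le> exp (x^2/16)" by (rule exp_ge_add_one_self)
    thus ?thesis by linarith
  qed
  have "(1 + x^2)^4 \<le> (16 * exp (x^2/16))^4" by (rule power_mono[OF a]) simp
  also have "\<dots> = 65536 * exp (x^2/16)^4" by (simp add: power_mult_distrib)
  also have "exp (x^2/16)^4 = exp (real 4 * (x^2/16))" by (rule exp_of_nat_mult[symmetric])
  also have "real 4 * (x^2/16) = x^2/4" by simp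
  finally show ?thesis .
qed



lemma phi_poly_identity:
  fixes s mu x p a t E F m n :: real
  assumes s: "s \<noteq> 0" and mu: "mu \<noteq> 0" and p: "p = 1 - mu" "p \<noteq> 0"
    and a: "a = x*p/s" and t: "t = x*mu/s" and E: "E = s^2/p" and F: "F = s^2/mu"
    and m: "m = E - s*x" and n: "n = F + s*x"
  shows "-(m+1/2)*(-a - a^2/2 - a^3/3) - (n+1/2)*(t - t^2/2) - (- (x^2)/2 - x^3/(6* s) + x/(2* s))
     = x^3*mu*(1+p)/(6* s) - x*mu/s - x^4*p^3/(3* s^2) + x^3*mu^2/(2* s) + x^2*p^2/(4* s^2)
       + x^3*p^3/(6* s^3) + x^2*mu^2/(4* s^2)"
proof -
  have Ea: "E*a = s*x" using s p unfolding E a by (simp add: field_simps power2_eq_square)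
  have Ft: "F*t = s*x" using s mu unfolding F t by (simp add: field_simps power2_eq_square)
  have m': "m = E - E*a" using m Ea by simp
  have n': "n = F + F*t" using n Ft by simp
  have "a + t = x*(p+mu)/s" unfolding a t by (simp add: add_divide_distrib distrib_left)
  hence "a + t = x/s" using p by simp
  hence st: "s*(a+t) = x" using s by simp
  have "-(m+1/2)*(-a - a^2/2 - a^3/3) - (n+1/2)*(t - t^2/2) =
        (E*a) - (E*a)*a/2 - (E*a)*a^2/6 - (E*a)*a^3/3 + (a + a^2/2 + a^3/3)/2
        - (F*t) - (F*t)*t/2 + (F*t)*t^2/2 - (t - t^2/2)/2"
    unfolding m' n' by (simp add: field_simps power2_eq_square power3_eq_cube)
  also have "\<dots> = - (s*(a+t))*x/2 - s*x*a^2/6 - s*x*a^3/3 + s*x*t^2/2 + (a - t)/2 + a^2/4 + a^3/6 + t^2/4"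
    unfolding Ea Ft by (simp add: field_simps power2_eq_square power3_eq_cube)
  also have "\<dots> = - (x^2)/2 - s*x*a^2/6 - s*x*a^3/3 + s*x*t^2/2 + (a - t)/2 + a^2/4 + a^3/6 + t^2/4"
    unfolding st by (simp add: power2_eq_square)
  finally have A: "-(m+1/2)*(-a - a^2/2 - a^3/3) - (n+1/2)*(t - t^2/2) =
     - (x^2)/2 - s*x*a^2/6 - s*x*a^3/3 + s*x*t^2/2 + (a - t)/2 + a^2/4 + a^3/6 + t^2/4" .
  have B1: "x^3/(6* s) - s*x*a^2/6 = x^3*mu*(1+p)/(6* s)"
  proof -
    have mup: "mu = 1 - p" using p by simp
    show ?thesis unfolding a mup using s p(2) by (simp add: field_simps power2_eq_square power3_eq_cube)
  qed
  have B2: "(a - t)/2 - x/(2* s) = - x*mu/s"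
  proof -
    have mup: "mu = 1 - p" using p by simp
    show ?thesis unfolding a t mup using s p(2) by (simp add: field_simps)
  qed
  have B3: "s*x*a^3/3 = x^4*p^3/(3* s^2)"
    unfolding a using s by (simp add: field_simps power2_eq_square power3_eq_cube power4_eq_xxxx)
  have B4: "s*x*t^2/2 = x^3*mu^2/(2* s)"
    unfolding t using s by (simp add: field_simps power2_eq_square power3_eq_cube)
  have B5: "a^2/4 = x^2*p^2/(4* s^2)" "a^3/6 = x^3*p^3/(6* s^3)" "t^2/4 = x^2*mu^2/(4* s^2)"
    unfolding a t by (simp_all add: power_divide power_mult_distrib)
  show ?thesis unfolding A using B1 B2 B3 B4 B5 by linarith
qed

lemma coefK: fixes y c K :: real assumes "0 \<le> c" "c \<le> K" shows "\<bar>y * c\<bar> \<le> K * \<bar>y\<bar>"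
proof -
  have "\<bar>y * c\<bar> = \<bar>y\<bar> * c" using assms by (simp add: abs_mult)
  also have "\<dots> \<le> \<bar>y\<bar> * K" using assms by (intro mult_left_mono) auto
  finally show ?thesis by (simp add: mult.commute)
qed

lemma D_as_Num:
  fixes s mu x p :: real assumes s: "s \<noteq> 0"
  shows "x^3*mu*(1+p)/(6* s) - x*mu/s - x^4*p^3/(3* s^2) + x^3*mu^2/(2* s) + x^2*p^2/(4* s^2)
       + x^3*p^3/(6* s^3) + x^2*mu^2/(4* s^2)
   = (x^3*((mu* s^2)*(1+p)/(6* s)) - x*((mu* s^2)/s) - x^4*(p^3/3) + x^3*((mu* s^2)*mu/(2* s))
      + x^2*(p^2/4) + x^3*(p^3/(6* s)) + x^2*(mu^2/4)) / s^2"
  using s by (simp add: field_simps power2_eq_square power3_eq_cube)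

lemma Y_bounds: fixes x :: real
  shows "\<bar>x\<bar> \<le> (1+x^2)^2" "x^2 \<le> (1+x^2)^2" "\<bar>x\<bar>^3 \<le> (1+x^2)^2" "x^4 \<le> (1+x^2)^2" "1 \<le> (1+x^2)^2"
proof -
  have e: "(1+x^2)^2 = 1 + 2*x^2 + x^4" by (simp add: power2_eq_square power4_eq_xxxx algebra_simps)
  have x4: "x^4 \<ge> 0" by simp
  have x2: "x^2 \<ge> 0" by simp
  show "x^2 \<le> (1+x^2)^2" "x^4 \<le> (1+x^2)^2" "1 \<le> (1+x^2)^2" unfolding e using x4 x2 by linarith+
  have a: "\<bar>x\<bar> \<le> 1 + x^2"
  proof (cases "\<bar>x\<bar> \<le> 1")
    case True thus ?thesis using x2 by linarith
  next
    case False
    hence "\<bar>x\<bar> * 1 \<le> \<bar>x\<bar> * \<bar>x\<bar>" by (intro mult_left_mono) auto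
    thus ?thesis by (simp add: power2_eq_square abs_mult[symmetric])
  qed
  show "\<bar>x\<bar> \<le> (1+x^2)^2" using a x2 x4 unfolding e by linarith
  show "\<bar>x\<bar>^3 \<le> (1+x^2)^2"
  proof (cases "\<bar>x\<bar> \<le> 1")
    case True
    hence "\<bar>x\<bar>^3 \<le> 1^3" by (intro power_mono) auto
    hence "\<bar>x\<bar>^3 \<le> 1" by simp
    thus ?thesis using x2 x4 unfolding e by linarith
  next
    case False
    hence "\<bar>x\<bar>^3 * 1 \<le> \<bar>x\<bar>^3 * \<bar>x\<bar>" by (intro mult_left_mono) auto
    also have "\<dots> = x^4" by (simp add: power4_eq_xxxx power3_eq_cube abs_mult[symmetric])
    finally show ?thesis using x2 unfolding e by linarith
  qed
qed

lemma abs7: fixes a b c d e f g :: real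
  shows "\<bar>a - b - c + d + e + f + g\<bar> \<le> \<bar>a\<bar>+\<bar>b\<bar>+\<bar>c\<bar>+\<bar>d\<bar>+\<bar>e\<bar>+\<bar>f\<bar>+\<bar>g\<bar>"
  using abs_ge_self[of a] abs_ge_minus_self[of a] abs_ge_self[of b] abs_ge_minus_self[of b]
    abs_ge_self[of c] abs_ge_minus_self[of c] abs_ge_self[of d] abs_ge_minus_self[of d]
    abs_ge_self[of e] abs_ge_minus_self[of e] abs_ge_self[of f] abs_ge_minus_self[of f]
    abs_ge_self[of g] abs_ge_minus_self[of g]
  unfolding abs_le_iff by linarith

lemma Num_bound:
  fixes s mu x p :: real assumes s: "s \<ge> 1" and mu: "0 < mu" "mu * s^2 \<le> 2" "mu \<le> 1" and p: "0 \<le> p" "p \<le> 1"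
  shows "\<bar>x^3*((mu* s^2)*(1+p)/(6* s)) - x*((mu* s^2)/s) - x^4*(p^3/3) + x^3*((mu* s^2)*mu/(2* s))
      + x^2*(p^2/4) + x^3*(p^3/(6* s)) + x^2*(mu^2/4)\<bar> \<le> 9 * (1+x^2)^2"
proof -
  define q where "q = mu* s^2"
  have q: "0 \<le> q" "q \<le> 2" using mu by (auto simp: q_def)
  have s0: "s > 0" using s by simp
  have c1: "\<bar>x^3*(q*(1+p)/(6* s))\<bar> \<le> 1 * \<bar>x^3\<bar>"
  proof (rule coefK)
    show "0 \<le> q*(1+p)/(6* s)" using q p s0 by simp
    have "q*(1+p) \<le> 2*2" using q p by (intro mult_mono) auto
    also have "\<dots> \<le> 6* s" using s by simp
    finally show "q*(1+p)/(6* s) \<le> 1" using s0 by simp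
  qed
  have c2: "\<bar>x*(q/s)\<bar> \<le> 2 * \<bar>x\<bar>"
  proof (rule coefK)
    show "0 \<le> q/s" using q s0 by simp
    have "q \<le> 2* s" using q s by linarith
    thus "q/s \<le> 2" using s0 by (simp add: divide_le_eq)
  qed
  have c3: "\<bar>x^4*(p^3/3)\<bar> \<le> 1 * \<bar>x^4\<bar>"
  proof (rule coefK)
    show "0 \<le> p^3/3" using p by simp
    have "p^3 \<le> 1" using p by (simp add: power_le_one)
    thus "p^3/3 \<le> 1" by simp
  qed
  have c4: "\<bar>x^3*(q*mu/(2* s))\<bar> \<le> 1 * \<bar>x^3\<bar>"
  proof (rule coefK)
    show "0 \<le> q*mu/(2* s)" using q mu s0 by simp
    have "q*mu \<le> 2*1" using q mu by (intro mult_mono) auto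
    also have "\<dots> \<le> 2* s" using s by simp
    finally show "q*mu/(2* s) \<le> 1" using s0 by simp
  qed
  have c5: "\<bar>x^2*(p^2/4)\<bar> \<le> 1 * \<bar>x^2\<bar>"
  proof (rule coefK)
    show "0 \<le> p^2/4" by simp
    have "p^2 \<le> 1" using p by (simp add: power_le_one)
    thus "p^2/4 \<le> 1" by simp
  qed
  have c6: "\<bar>x^3*(p^3/(6* s))\<bar> \<le> 1 * \<bar>x^3\<bar>"
  proof (rule coefK)
    show "0 \<le> p^3/(6* s)" using p s0 by simp
    have "p^3 \<le> 1" using p by (simp add: power_le_one)
    also have "1 \<le> 6* s" using s by simp
    finally show "p^3/(6* s) \<le> 1" using s0 by simp
  qed
  have c7: "\<bar>x^2*(mu^2/4)\<bar> \<le> 1 * \<bar>x^2\<bar>"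
  proof (rule coefK)
    show "0 \<le> mu^2/4" by simp
    have "mu^2 \<le> 1" using mu by (simp add: power_le_one)
    thus "mu^2/4 \<le> 1" by simp
  qed
  have Y: "\<bar>x\<bar> \<le> (1+x^2)^2" "x^2 \<le> (1+x^2)^2" "\<bar>x\<bar>^3 \<le> (1+x^2)^2" "x^4 \<le> (1+x^2)^2"
    using Y_bounds by auto
  have ab: "\<bar>x^3\<bar> = \<bar>x\<bar>^3" "\<bar>x^4\<bar> = x^4" "\<bar>x^2\<bar> = x^2" by (simp_all add: power_abs)
  have A: "\<bar>x^3*(q*(1+p)/(6* s)) - x*(q/s) - x^4*(p^3/3) + x^3*(q*mu/(2* s))
      + x^2*(p^2/4) + x^3*(p^3/(6* s)) + x^2*(mu^2/4)\<bar> \<le> \<bar>x^3*(q*(1+p)/(6* s))\<bar> + \<bar>x*(q/s)\<bar> + \<bar>x^4*(p^3/3)\<bar> + \<bar>x^3*(q*mu/(2* s))\<bar>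
      + \<bar>x^2*(p^2/4)\<bar> + \<bar>x^3*(p^3/(6* s))\<bar> + \<bar>x^2*(mu^2/4)\<bar>" by (rule abs7)
  also have "\<dots> \<le> 1 * \<bar>x^3\<bar> + 2 * \<bar>x\<bar> + 1 * \<bar>x^4\<bar> + 1 * \<bar>x^3\<bar> + 1 * \<bar>x^2\<bar> + 1 * \<bar>x^3\<bar> + 1 * \<bar>x^2\<bar>"
    by (intro add_mono c1 c2 c3 c4 c5 c6 c7)
  also have "\<dots> \<le> 9 * (1+x^2)^2" unfolding ab using Y by linarith
  finally show ?thesis unfolding q_def .
qed



lemma exp_half_ln: "exp (ln (2*pi)/2) = sqrt (2*pi)"
proof -
  have "exp (ln (2*pi)/2) = exp (ln (2*pi) * (1/2))" by simp
  also have "\<dots> = (2*pi) powr (1/2)" using pi_gt_zero by (simp add: powr_def)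
  also have "\<dots> = sqrt (2*pi)" by (simp add: powr_half_sqrt)
  finally show ?thesis .
qed

lemma final_step:
  fixes s x R :: real
  assumes s: "s \<ge> 50" and x: "\<bar>x\<bar> \<le> s/32" and R: "\<bar>R\<bar> \<le> 40*(1+x^2)^2/s^2"
  shows "\<bar>exp (- (ln (2*pi)/2) - ln s + (- (x^2)/2 - (x^3)/(6* s) + x/(2* s)) + R)
     - ((1 / sqrt (2 * pi)) * exp (- x\<^sup>2 / 2) * (1 / s)
        - (1 / (6 * sqrt (2 * pi))) * x * (x\<^sup>2 - 3) * exp (- x\<^sup>2 / 2) * (1 / s\<^sup>2))\<bar>
     \<le> 2000000000 / s^3"
proof -
  define Y where "Y = (1+x^2)^2"
  define d1 where "d1 = - (x^3)/(6* s) + x/(2* s)"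
  define d where "d = d1 + R"
  define ph where "ph = exp (- x\<^sup>2 / 2)"
  have s0: "s > 0" using s by simp
  have Y1: "1 \<le> Y" unfolding Y_def using Y_bounds by auto
  have ph0: "ph > 0" unfolding ph_def by simp
  have sq: "sqrt (2*pi) \<ge> 1"
  proof -
    have "1 \<le> 2*pi" using pi_gt3 by linarith
    thus ?thesis by simp
  qed
  have E1: "exp (- (ln (2*pi)/2) - ln s + (- (x^2)/2 - (x^3)/(6* s) + x/(2* s)) + R)
        = (1/sqrt (2*pi)) * (1/s) * ph * exp d"
  proof -
    have "- (ln (2*pi)/2) - ln s + (- (x^2)/2 - (x^3)/(6* s) + x/(2* s)) + R
          = - (ln (2*pi)/2) + (- ln s) + (- x\<^sup>2 / 2) + d"
      unfolding d_def d1_def by simp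
    hence "exp (- (ln (2*pi)/2) - ln s + (- (x^2)/2 - (x^3)/(6* s) + x/(2* s)) + R)
          = exp (- (ln (2*pi)/2)) * exp (- ln s) * exp (- x\<^sup>2 / 2) * exp d"
      by (simp only: exp_add)
    also have "exp (- (ln (2*pi)/2)) = 1/sqrt (2*pi)" using exp_half_ln by (simp add: exp_minus inverse_eq_divide)
    also have "exp (- ln s) = 1/s" using s0 by (simp add: exp_minus inverse_eq_divide)
    finally show ?thesis unfolding ph_def by simp
  qed
  have E2: "(1 / sqrt (2 * pi)) * exp (- x\<^sup>2 / 2) * (1 / s)
        - (1 / (6 * sqrt (2 * pi))) * x * (x\<^sup>2 - 3) * exp (- x\<^sup>2 / 2) * (1 / s\<^sup>2)
        = (1/sqrt (2*pi)) * (1/s) * ph * (1 + d1)"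
    unfolding ph_def d1_def using s0 by (simp add: field_simps power2_eq_square power3_eq_cube)
  have diff: "exp (- (ln (2*pi)/2) - ln s + (- (x^2)/2 - (x^3)/(6* s) + x/(2* s)) + R)
     - ((1 / sqrt (2 * pi)) * exp (- x\<^sup>2 / 2) * (1 / s)
        - (1 / (6 * sqrt (2 * pi))) * x * (x\<^sup>2 - 3) * exp (- x\<^sup>2 / 2) * (1 / s\<^sup>2))
     = (1/sqrt (2*pi)) * (1/s) * ph * (exp d - 1 - d1)"
    unfolding E1 E2 by (simp add: right_diff_distrib distrib_left)
  have xs: "\<bar>x\<bar>/s \<le> 1/32" using x s0 by (simp add: divide_le_eq)
  have tri: "\<bar>d1\<bar> \<le> \<bar>x^3/(6* s)\<bar> + \<bar>x/(2* s)\<bar>"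
  proof -
    have "\<bar>d1\<bar> \<le> \<bar>(- (x^3))/(6* s)\<bar> + \<bar>x/(2* s)\<bar>" unfolding d1_def by (rule abs_triangle_ineq)
    also have "\<bar>(- (x^3))/(6* s)\<bar> = \<bar>x^3/(6* s)\<bar>" by simp
    finally show ?thesis .
  qed
  have d1b: "\<bar>d1\<bar> \<le> Y/s"
  proof -
    note tri
    also have "\<dots> = \<bar>x\<bar>^3/(6* s) + \<bar>x\<bar>/(2* s)" using s0 by (simp add: abs_divide power_abs)
    also have "\<dots> \<le> Y/(6* s) + Y/(2* s)" using Y_bounds[of x] s0 unfolding Y_def
      by (intro add_mono divide_right_mono) auto
    also have "\<dots> \<le> Y/s" using s0 Y1 by (simp add: field_simps)
    finally show ?thesis .
  qed
  have d1e: "\<bar>d1\<bar> \<le> x^2/192 + 1/64"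
  proof -
    have "\<bar>d1\<bar> \<le> \<bar>x\<bar>^3/(6* s) + \<bar>x\<bar>/(2* s)"
    proof -
      from tri show ?thesis using s0 by (simp add: abs_divide power_abs)
    qed
    also have "\<bar>x\<bar>^3/(6* s) = x^2 * (\<bar>x\<bar>/s) / 6" by (simp add: power3_eq_cube power2_eq_square abs_mult[symmetric])
    also have "\<bar>x\<bar>/(2* s) = (\<bar>x\<bar>/s)/2" by simp
    also have "x^2 * (\<bar>x\<bar>/s) / 6 + (\<bar>x\<bar>/s)/2 \<le> x^2 * (1/32) / 6 + (1/32)/2"
      using xs by (intro add_mono divide_right_mono mult_left_mono) auto
    finally show ?thesis by simp
  qed
  have Re: "\<bar>R\<bar> \<le> 1/10 + x^2/20"
  proof -
    have s2: "s^2 \<ge> 2500" using power_mono[OF s, of 2] by simp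
    have x2: "x^2/s^2 \<le> 1/1024"
    proof -
      have "(\<bar>x\<bar>/s)^2 \<le> (1/32)^2" using xs s0 by (intro power_mono) auto
      thus ?thesis by (simp add: power_divide)
    qed
    have "40*(1+x^2)^2/s^2 = 40/s^2 + 80*(x^2/s^2) + 40*x^2*(x^2/s^2)"
      using s0 by (simp add: field_simps power2_eq_square)
    also have "\<dots> \<le> 40/2500 + 80*(1/1024) + 40*x^2*(1/1024)"
    proof (intro add_mono)
      show "40/s^2 \<le> 40/2500" using s2 by (intro divide_left_mono) auto
      show "80*(x^2/s^2) \<le> 80*(1/1024)" using x2 by simp
      show "40*x^2*(x^2/s^2) \<le> 40*x^2*(1/1024)" using x2 by (intro mult_left_mono) auto
    qed
    finally have "40*(1+x^2)^2/s^2 \<le> 40/2500 + 80*(1/1024) + 40*x^2*(1/1024)" .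
    thus ?thesis using R zero_le_power2[of x] by linarith
  qed
  have de: "\<bar>d\<bar> \<le> x^2/4 + 1" unfolding d_def using d1e Re abs_triangle_ineq[of d1 R]
    by (simp add: zero_le_power2)
  have Rb: "\<bar>R\<bar> \<le> 40*Y/s^2" using R unfolding Y_def by simp
  have R2: "R^2 \<le> 1600*Y^2/s^2"
  proof -
    have "R^2 = \<bar>R\<bar>^2" by simp
    also have "\<dots> \<le> (40*Y/s^2)^2" using Rb by (intro power_mono) auto
    also have "\<dots> = 1600*Y^2/s^2 * (1/s^2)" by (simp add: power_divide power_mult_distrib power2_eq_square)
    also have "\<dots> \<le> 1600*Y^2/s^2 * 1"
    proof (intro mult_left_mono)
      have "1 \<le> s^2" using s by (simp add: one_le_power)
      thus "1/s^2 \<le> 1" by (simp add: divide_le_eq)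
    qed simp
    finally show ?thesis by simp
  qed
  have D12: "d1^2 \<le> Y^2/s^2"
  proof -
    have "d1^2 = \<bar>d1\<bar>^2" by simp
    also have "\<dots> \<le> (Y/s)^2" using d1b by (intro power_mono) auto
    finally show ?thesis by (simp add: power_divide)
  qed
  have dsq: "d^2 \<le> 3202*Y^2/s^2"
  proof -
    have e: "2*d1^2 + 2*R^2 - (d1+R)^2 = (d1-R)^2" by (simp add: power2_eq_square algebra_simps)
    have "0 \<le> (d1-R)^2" by simp
    hence "d^2 \<le> 2*d1^2 + 2*R^2" unfolding d_def e[symmetric] by simp
    thus ?thesis using D12 R2 by simp
  qed
  have expd: "exp \<bar>d\<bar> \<le> 3 * exp (x^2/4)"
  proof -
    have "exp \<bar>d\<bar> \<le> exp (x^2/4 + 1)" using de by simp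
    also have "\<dots> = exp 1 * exp (x^2/4)" by (simp add: exp_add mult.commute)
    also have "\<dots> \<le> 3 * exp (x^2/4)" using exp_le by (intro mult_right_mono) auto
    finally show ?thesis .
  qed
  have core: "\<bar>exp d - 1 - d1\<bar> \<le> 9700 * Y^2 * exp (x^2/4) / s^2"
  proof -
    have "\<bar>exp d - 1 - d1\<bar> \<le> \<bar>exp d - 1 - d\<bar> + \<bar>R\<bar>" unfolding d_def by simp
    also have "\<bar>exp d - 1 - d\<bar> \<le> d^2 * exp \<bar>d\<bar>" by (rule exp_taylor1)
    also have "d^2 * exp \<bar>d\<bar> \<le> (3202*Y^2/s^2) * (3 * exp (x^2/4))"
      using dsq expd by (intro mult_mono) auto
    also have "\<bar>R\<bar> \<le> 40*Y/s^2" by (rule Rb)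
    also have "40*Y/s^2 \<le> 40*Y^2*exp (x^2/4)/s^2"
    proof -
      have "Y \<le> Y^2" using Y1 by (simp add: power2_eq_square)
      also have "\<dots> \<le> Y^2 * exp (x^2/4)" using Y1 by simp
      finally show ?thesis using s0 by (simp add: divide_right_mono)
    qed
    finally show ?thesis by (simp add: field_simps)
  qed
  have Y2: "Y^2 \<le> 65536 * exp (x^2/4)" unfolding Y_def using poly_exp_bound[of x] by (simp add: power_mult[symmetric])
  have phe: "ph * (exp (x^2/4) * exp (x^2/4)) = 1" unfolding ph_def by (simp add: exp_add[symmetric])
  have "\<bar>(1/sqrt (2*pi)) * (1/s) * ph * (exp d - 1 - d1)\<bar> = (1/sqrt (2*pi)) * (1/s) * ph * \<bar>exp d - 1 - d1\<bar>"
    using s0 ph0 by (simp add: abs_mult)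
  also have "\<dots> \<le> 1 * (1/s) * ph * (9700 * Y^2 * exp (x^2/4) / s^2)"
    using sq s0 ph0 core by (intro mult_mono) (auto simp: divide_le_eq)
  also have "\<dots> \<le> 1 * (1/s) * ph * (9700 * (65536 * exp (x^2/4)) * exp (x^2/4) / s^2)"
    using s0 ph0 Y2 by (intro mult_left_mono divide_right_mono mult_right_mono) auto
  also have "\<dots> = 9700 * 65536 * (ph * (exp (x^2/4) * exp (x^2/4))) / s^3"
    using s0 by (simp add: field_simps power2_eq_square power3_eq_cube)
  also have "\<dots> \<le> 2000000000 / s^3" unfolding phe using s0 by (simp add: divide_right_mono)
  finally show ?thesis unfolding diff .
qed



lemma log_identity:
  fixes NN m n mu p s a t :: real
  assumes s: "s > 0" and mu: "mu > 0" and p: "p > 0" and NN: "NN > 0" and a: "1 - a > 0" and t: "1 + t > 0"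
    and m: "m = NN*mu*(1-a)" and n: "n = NN*p*(1+t)" and NNs: "NN = m + n" and ss: "s^2 = NN*mu*p"
  shows "(NN+1/2)*ln NN - (n+1/2)*ln n - (m+1/2)*ln m + m*ln mu + n*ln p
       = - ln s - (m+1/2)*ln(1-a) - (n+1/2)*ln(1+t)"
proof -
  have lm: "ln m = ln NN + ln mu + ln (1-a)" unfolding m using NN mu a by (simp add: ln_mult)
  have ln: "ln n = ln NN + ln p + ln (1+t)" unfolding n using NN p t by (simp add: ln_mult)
  have "ln (s^2) = ln NN + ln mu + ln p" unfolding ss using NN mu p by (simp add: ln_mult)
  moreover have "ln (s^2) = 2 * ln s" using s by (simp add: ln_mult power2_eq_square)
  ultimately have ls: "2 * ln s = ln NN + ln mu + ln p" by simp
  have NNl: "NN * ln NN = m * ln NN + n * ln NN" using NNs by (simp add: algebra_simps)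
  show ?thesis unfolding lm ln using ls NNl by (simp add: algebra_simps)
qed

lemma core:
  fixes s mu x :: real and N :: nat
  assumes s: "s \<ge> 50" and mu0: "0 < mu" and mu2: "mu \<le> 2/s^2"
    and NNh: "real N * mu * (1-mu) = s^2" and x: "\<bar>x\<bar> \<le> s/32"
  shows "\<bar>bin_interp N mu s x
             - ((1 / sqrt (2 * pi)) * exp (- x\<^sup>2 / 2) * (1 / s)
                - (1 / (6 * sqrt (2 * pi))) * x * (x\<^sup>2 - 3) * exp (- x\<^sup>2 / 2) * (1 / s\<^sup>2))\<bar>
           \<le> 2000000000 / s ^ 3"
proof -
  define p where "p = 1 - mu"
  define NN where "NN = real N"
  define a where "a = x*p/s"
  define t where "t = x*mu/s"
  define E where "E = s^2/p"
  define F where "F = s^2/mu"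
  define m where "m = NN*mu - s*x"
  define n where "n = NN - m"
  define Y where "Y = (1+x^2)^2"
  have s0: "s > 0" using s by simp
  have s1: "s \<ge> 1" using s by simp
  have s2: "s^2 \<ge> 2500" using power_mono[OF s, of 2] by simp
  have s2p: "s^2 > 0" using s0 by simp
  have musq: "mu* s^2 \<le> 2" using mu2 s2p by (simp add: le_divide_eq)
  have mu_small: "mu \<le> 1/1250"
  proof -
    have "2/s^2 \<le> 2/2500" using s2 by (intro divide_left_mono) auto
    thus ?thesis using mu2 by simp
  qed
  have mu1: "mu \<le> 1" using mu_small by simp
  have p: "p \<ge> 1/2" "p \<le> 1" "p > 0" using mu_small mu0 unfolding p_def by auto
  have NNp: "NN*mu*p = s^2" using NNh unfolding NN_def p_def .
  have NN0: "NN > 0"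
  proof -
    have "NN*mu*p > 0" using NNp s2p by simp
    thus ?thesis using mu0 p(3) by (simp add: zero_less_mult_iff)
  qed
  have xs: "\<bar>x\<bar>/s \<le> 1/32" using x s0 by (simp add: divide_le_eq)
  have sx: "s*\<bar>x\<bar> \<le> s^2/32" using x s0 by (simp add: power2_eq_square mult_left_mono[of _ _ s] field_simps)
  have Ea: "E*a = s*x" unfolding E_def a_def using s0 p by (simp add: field_simps power2_eq_square)
  have Ft: "F*t = s*x" unfolding F_def t_def using s0 mu0 by (simp add: field_simps power2_eq_square)
  have NNmu: "NN*mu = E" unfolding E_def using NNp p by (simp add: field_simps)
  have NNpF: "NN*p = F" unfolding F_def using NNp mu0 by (simp add: field_simps)
  have mE: "m = E - s*x" unfolding m_def NNmu ..
  have NNEF: "NN = E + F"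
  proof -
    have "NN = NN*mu + NN*p" unfolding p_def by (simp add: algebra_simps)
    thus ?thesis unfolding NNmu NNpF .
  qed
  have nF: "n = F + s*x" unfolding n_def mE using NNEF by simp
  have m_alt: "m = NN*mu*(1-a)" unfolding NNmu mE using Ea by (simp add: algebra_simps)
  have n_alt: "n = NN*p*(1+t)" unfolding NNpF nF using Ft by (simp add: algebra_simps)
  have Es: "E \<ge> s^2" "E \<le> 2* s^2" unfolding E_def using p s2p by (auto simp: field_simps)
  have Fs: "F \<ge> s^2" unfolding F_def using mu0 mu1 s2p by (auto simp: field_simps)
  have sxa: "\<bar>s*x\<bar> \<le> s^2/32" using sx s0 by (simp add: abs_mult)
  have mlow: "m \<ge> s^2/2" unfolding mE using Es sxa by linarith
  have nlow: "n \<ge> s^2/2" unfolding nF using Fs sxa by linarith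
  have NNlow: "NN \<ge> s^2" using NNEF Es Fs s2p by linarith
  have m0: "m > 0" using mlow s2p by linarith
  have n0: "n > 0" using nlow s2p by linarith
  have aa: "\<bar>a\<bar> \<le> \<bar>x\<bar>/s" unfolding a_def using p s0
    by (simp add: abs_mult abs_divide divide_right_mono mult_left_le)
  have tt: "\<bar>t\<bar> \<le> \<bar>x\<bar>/s" unfolding t_def using mu0 mu1 s0
    by (simp add: abs_mult abs_divide divide_right_mono mult_left_le)
  have a32: "\<bar>a\<bar> \<le> 1/32" using aa xs by linarith
  have t32: "\<bar>t\<bar> \<le> 1/32" using tt xs by linarith
  have a1: "1 - a > 0" using a32 by linarith
  have t1: "1 + t > 0" using t32 by linarith

  have g1: "Gamma (NN+1) > 0" "Gamma (n+1) > 0" "Gamma (m+1) > 0"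
    using NN0 n0 m0 by (auto intro!: Gamma_real_pos)
  have B0: "bin_interp N mu s x = Gamma (NN+1)/(Gamma(n+1)*Gamma(m+1)) * mu powr m * p powr n"
    by (simp add: bin_interp_def Let_def NN_def m_def n_def p_def)
  have B: "bin_interp N mu s x = exp (ln (Gamma (NN+1)) - ln (Gamma (n+1)) - ln (Gamma (m+1)) + m*ln mu + n*ln p)"
  proof -
    have "exp (ln (Gamma (NN+1)) - ln (Gamma (n+1)) - ln (Gamma (m+1)) + m*ln mu + n*ln p)
        = exp (ln (Gamma (NN+1))) / exp (ln (Gamma (n+1))) / exp (ln (Gamma (m+1))) * exp (m*ln mu) * exp (n*ln p)"
      by (simp add: exp_add exp_diff)
    also have "\<dots> = Gamma (NN+1)/(Gamma(n+1)*Gamma(m+1)) * mu powr m * p powr n"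
      using g1 mu0 p(3) by (simp add: powr_def mult.commute)
    finally show ?thesis unfolding B0 by simp
  qed
  define c where "c = ln (2*pi)/2"
  define eN where "eN = ln (Gamma (NN+1)) - ((NN+1/2)*ln NN - NN + c)"
  define en where "en = ln (Gamma (n+1)) - ((n+1/2)*ln n - n + c)"
  define em where "em = ln (Gamma (m+1)) - ((m+1/2)*ln m - m + c)"
  have eNb: "0 \<le> eN" "eN \<le> 1/(12*NN)" unfolding eN_def c_def using stirling_bound[OF NN0] by auto
  have enb: "0 \<le> en" "en \<le> 1/(12*n)" unfolding en_def c_def using stirling_bound[OF n0] by auto
  have emb: "0 \<le> em" "em \<le> 1/(12*m)" unfolding em_def c_def using stirling_bound[OF m0] by auto
  define rho1 where "rho1 = ln (1-a) - (-a - a^2/2 - a^3/3)"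
  define rho2 where "rho2 = ln (1+t) - (t - t^2/2)"
  have r1: "\<bar>rho1\<bar> \<le> 4*a^4"
  proof -
    have h: "\<bar>-a\<bar> \<le> 1/2" using a32 by simp
    from ln_taylor[OF h] show ?thesis unfolding rho1_def by simp
  qed
  have r2: "\<bar>rho2\<bar> \<le> 3*\<bar>t\<bar>^3"
  proof -
    have h: "\<bar>t\<bar> \<le> 1/2" using t32 by simp
    from ln_taylor2[OF h] show ?thesis unfolding rho2_def .
  qed
  define Dx where "Dx = x^3*mu*(1+p)/(6* s) - x*mu/s - x^4*p^3/(3* s^2) + x^3*mu^2/(2* s) + x^2*p^2/(4* s^2)
       + x^3*p^3/(6* s^3) + x^2*mu^2/(4* s^2)"
  have PI: "-(m+1/2)*(-a - a^2/2 - a^3/3) - (n+1/2)*(t - t^2/2) - (- (x^2)/2 - x^3/(6* s) + x/(2* s)) = Dx"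
    unfolding Dx_def
    by (rule phi_poly_identity[OF _ _ p_def _ a_def t_def E_def F_def mE nF]) (use s0 mu0 p in auto)
  have LI: "(NN+1/2)*ln NN - (n+1/2)*ln n - (m+1/2)*ln m + m*ln mu + n*ln p
       = - ln s - (m+1/2)*ln(1-a) - (n+1/2)*ln(1+t)"
    by (rule log_identity[OF s0 mu0 p(3) NN0 a1 t1 m_alt n_alt _ NNp[symmetric]]) (simp add: n_def)
  define R where "R = Dx - (m+1/2)*rho1 - (n+1/2)*rho2 + (eN - en - em)"
  have X1: "(m+1/2)*ln(1-a) = (m+1/2)*(-a - a^2/2 - a^3/3) + (m+1/2)*rho1"
    unfolding rho1_def by (simp add: algebra_simps)
  have X2: "(n+1/2)*ln(1+t) = (n+1/2)*(t - t^2/2) + (n+1/2)*rho2"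
    unfolding rho2_def by (simp add: algebra_simps)
  have nm: "NN = n + m" unfolding n_def by simp
  have lb: "ln (Gamma (NN+1)) - ln (Gamma (n+1)) - ln (Gamma (m+1)) + m*ln mu + n*ln p
      = - (ln (2*pi)/2) - ln s + (- (x^2)/2 - x^3/(6* s) + x/(2* s)) + R"
    using eN_def en_def em_def LI X1 X2 PI nm unfolding R_def c_def by linarith

  have Yb: "\<bar>x\<bar> \<le> Y" "x^2 \<le> Y" "\<bar>x\<bar>^3 \<le> Y" "x^4 \<le> Y" "1 \<le> Y" unfolding Y_def using Y_bounds by auto
  have Db: "\<bar>Dx\<bar> \<le> 9*Y/s^2"
  proof -
    have "Dx = (x^3*((mu* s^2)*(1+p)/(6* s)) - x*((mu* s^2)/s) - x^4*(p^3/3) + x^3*((mu* s^2)*mu/(2* s))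
      + x^2*(p^2/4) + x^3*(p^3/(6* s)) + x^2*(mu^2/4)) / s^2"
      unfolding Dx_def by (rule D_as_Num) (use s0 in simp)
    hence "\<bar>Dx\<bar> = \<bar>x^3*((mu* s^2)*(1+p)/(6* s)) - x*((mu* s^2)/s) - x^4*(p^3/3) + x^3*((mu* s^2)*mu/(2* s))
      + x^2*(p^2/4) + x^3*(p^3/(6* s)) + x^2*(mu^2/4)\<bar> / s^2" by (simp add: abs_divide)
    also have "\<dots> \<le> 9*(1+x^2)^2 / s^2"
      using Num_bound[OF s1 mu0 musq mu1, of p x] p by (intro divide_right_mono) auto
    finally show ?thesis unfolding Y_def .
  qed
  have R1b: "\<bar>(m+1/2)*rho1\<bar> \<le> 12*Y/s^2"
  proof -
    have mh: "m + 1/2 \<le> 3* s^2" using mE Es sxa s2 by linarith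
    have mh0: "m + 1/2 \<ge> 0" using m0 by simp
    have a4: "a^4 \<le> x^4/s^4"
    proof -
      have "\<bar>a\<bar>^4 \<le> (\<bar>x\<bar>/s)^4" using aa by (intro power_mono) auto
      thus ?thesis by (simp add: power_divide power_abs[symmetric] power4_eq_xxxx abs_mult[symmetric])
    qed
    have "\<bar>(m+1/2)*rho1\<bar> = (m+1/2)*\<bar>rho1\<bar>" using mh0 by (simp add: abs_mult)
    also have "\<dots> \<le> (3* s^2) * (4*(x^4/s^4))"
      using mh mh0 r1 a4 by (intro mult_mono) auto
    also have "\<dots> = 12*x^4/s^2" using s0 by (simp add: field_simps power2_eq_square power4_eq_xxxx)
    also have "\<dots> \<le> 12*Y/s^2" using Yb by (intro divide_right_mono) auto
    finally show ?thesis .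
  qed
  have R2b: "\<bar>(n+1/2)*rho2\<bar> \<le> 18*Y/s^2"
  proof -
    have nh: "n + 1/2 \<le> 3*F" using nF Fs sxa s2 by linarith
    have nh0: "n + 1/2 \<ge> 0" using n0 by simp
    have Ft3: "F*\<bar>t\<bar>^3 = \<bar>x\<bar>^3 * (mu*(mu* s^2)) / s^3"
      unfolding F_def t_def using s0 mu0 by (simp add: abs_mult abs_divide power_divide power_mult_distrib field_simps power2_eq_square power3_eq_cube)
    have mm: "mu*(mu* s^2) \<le> 1*2" using mu1 musq mu0 by (intro mult_mono) auto
    have s3: "s^2 \<le> s^3" using s1 by (simp add: power_increasing)
    have Ft3b: "F*\<bar>t\<bar>^3 \<le> 2*\<bar>x\<bar>^3/s^2"
    proof -
      have "F*\<bar>t\<bar>^3 \<le> \<bar>x\<bar>^3 * 2 / s^3" unfolding Ft3 using mm s0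
        by (intro divide_right_mono mult_left_mono) auto
      also have "\<dots> \<le> \<bar>x\<bar>^3 * 2 / s^2" using s3 s2p s0 by (intro divide_left_mono) auto
      finally show ?thesis by (simp add: mult.commute)
    qed
    have "\<bar>(n+1/2)*rho2\<bar> = (n+1/2)*\<bar>rho2\<bar>" using nh0 by (simp add: abs_mult)
    also have "\<dots> \<le> (3*F) * (3*\<bar>t\<bar>^3)" using nh nh0 r2 by (intro mult_mono) auto
    also have "\<dots> = 9*(F*\<bar>t\<bar>^3)" by simp
    also have "\<dots> \<le> 9*(2*\<bar>x\<bar>^3/s^2)" using Ft3b by simp
    also have "\<dots> \<le> 18*Y/s^2" using Yb s2p by (simp add: divide_right_mono)
    finally show ?thesis .
  qed
  have eb: "\<bar>eN - en - em\<bar> \<le> Y/s^2"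
  proof -
    have "1/(12*NN) \<le> 1/(12* s^2)" using NNlow s2p NN0 by (intro divide_left_mono) (auto intro: mult_pos_pos)
    moreover have "1/(12*n) \<le> 1/(12*(s^2/2))" using nlow s2p n0 by (intro divide_left_mono) (auto intro: mult_pos_pos)
    moreover have "1/(12*m) \<le> 1/(12*(s^2/2))" using mlow s2p m0 by (intro divide_left_mono) (auto intro: mult_pos_pos)
    moreover have "1/s^2 \<le> Y/s^2" using Yb s2p by (intro divide_right_mono) auto
    moreover have "1/(12* s^2) + 2*(1/(12*(s^2/2))) \<le> 1/s^2" using s2p by (simp add: field_simps)
    ultimately show ?thesis using eNb enb emb by (simp add: abs_le_iff)
  qed
  have Rb: "\<bar>R\<bar> \<le> 40*(1+x^2)^2/s^2"
  proof -
    have "\<bar>R\<bar> \<le> \<bar>Dx\<bar> + \<bar>(m+1/2)*rho1\<bar> + \<bar>(n+1/2)*rho2\<bar> + \<bar>eN - en - em\<bar>"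
      unfolding R_def by (smt (verit) abs_triangle_ineq abs_triangle_ineq4)
    also have "\<dots> \<le> 9*Y/s^2 + 12*Y/s^2 + 18*Y/s^2 + Y/s^2" using Db R1b R2b eb by linarith
    also have "\<dots> = 40*Y/s^2" by (simp add: field_simps)
    finally show ?thesis unfolding Y_def .
  qed
  show ?thesis unfolding B lb using final_step[OF s x Rb] .
qed

theorem proposition2p2:
  fixes Sigma :: "real set" and N :: "real \<Rightarrow> nat" and mu :: "real \<Rightarrow> real" and alpha :: real
  assumes Sigma_pos: "Sigma \<subseteq> {0<..}"
    and Sigma_unbounded: "\<not> bdd_above Sigma"
    and N_pos: "\<And>s. s \<in> Sigma \<Longrightarrow> N s > 0"
    and mu_range: "\<And>s. s \<in> Sigma \<Longrightarrow> 0 < mu s \<and> mu s < 1"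
    and sigma_eq: "\<And>s. s \<in> Sigma \<Longrightarrow> s = sqrt (real (N s) * mu s * (1 - mu s))"
    and E_asymp: "\<exists>C s1. \<forall>s\<in>Sigma. s > s1 \<longrightarrow> \<bar>real (N s) * mu s - (s\<^sup>2 + 1)\<bar> \<le> C / s\<^sup>2"
    and alpha_pos: "alpha > 0"
  shows "\<exists>C > 0. \<exists>s0. \<forall>s\<in>Sigma. s > s0 \<longrightarrow> (\<forall>x. \<bar>x\<bar> \<le> s powr (1 - alpha) \<longrightarrow>
           \<bar>bin_interp (N s) (mu s) s x
             - ((1 / sqrt (2 * pi)) * exp (- x\<^sup>2 / 2) * (1 / s)
                - (1 / (6 * sqrt (2 * pi))) * x * (x\<^sup>2 - 3) * exp (- x\<^sup>2 / 2) * (1 / s\<^sup>2))\<bar>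
           \<le> C / s ^ 3)"
proof -
  obtain C s1 where Cs: "\<forall>s\<in>Sigma. s > s1 \<longrightarrow> \<bar>real (N s) * mu s - (s\<^sup>2 + 1)\<bar> \<le> C / s\<^sup>2"
    using E_asymp by blast
  define s0 where "s0 = max (max 50 s1) (max (sqrt \<bar>C\<bar>) (32 powr (1/alpha)))"
  have key: "\<bar>bin_interp (N s) (mu s) s x
             - ((1 / sqrt (2 * pi)) * exp (- x\<^sup>2 / 2) * (1 / s)
                - (1 / (6 * sqrt (2 * pi))) * x * (x\<^sup>2 - 3) * exp (- x\<^sup>2 / 2) * (1 / s\<^sup>2))\<bar>
           \<le> 2000000000 / s ^ 3"
    if sS: "s \<in> Sigma" and ss0: "s > s0" and xb: "\<bar>x\<bar> \<le> s powr (1 - alpha)" for s x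
  proof -
    have s50: "s \<ge> 50" using ss0 unfolding s0_def by simp
    have s0': "s > 0" using s50 by simp
    have ss1: "s > s1" using ss0 unfolding s0_def by simp
    have sC: "s > sqrt \<bar>C\<bar>" using ss0 unfolding s0_def by simp
    have sa: "s > 32 powr (1/alpha)" using ss0 unfolding s0_def by simp
    have mu: "0 < mu s" "mu s < 1" using mu_range[OF sS] by auto
    have NNh: "real (N s) * mu s * (1 - mu s) = s^2"
    proof -
      have "0 \<le> real (N s) * mu s * (1 - mu s)" using mu by simp
      thus ?thesis using sigma_eq[OF sS] by (metis real_sqrt_pow2)
    qed
    define E where "E = real (N s) * mu s"
    have E1: "E * (1 - mu s) = s^2" using NNh unfolding E_def .
    have Es: "E \<ge> s^2"
    proof -
      have "E \<ge> 0" unfolding E_def using mu by simp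
      hence "E * (1 - mu s) \<le> E * 1" using mu by (intro mult_left_mono) auto
      thus ?thesis using E1 by simp
    qed
    have s2p: "s^2 > 0" using s0' by simp
    have E0: "E > 0" using Es s2p by linarith
    have Cb: "\<bar>C\<bar> / s^2 \<le> 1"
    proof -
      have "sqrt \<bar>C\<bar> ^ 2 \<le> s^2" using sC by (intro power_mono) auto
      hence "\<bar>C\<bar> \<le> s^2" by simp
      thus ?thesis using s2p by (simp add: divide_le_eq)
    qed
    have "\<bar>E - (s^2 + 1)\<bar> \<le> C / s^2" using Cs sS ss1 unfolding E_def by auto
    moreover have "C / s^2 \<le> \<bar>C\<bar> / s^2" using s2p by (intro divide_right_mono) auto
    ultimately have Emu: "E * mu s \<le> 2" using E1 Cb by (simp add: algebra_simps abs_le_iff) 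
    have mu2: "mu s \<le> 2 / s^2"
    proof -
      have "mu s = (E * mu s) / E" using E0 by simp
      also have "\<dots> \<le> 2 / E" using Emu E0 by (intro divide_right_mono) auto
      also have "\<dots> \<le> 2 / s^2" using Es s2p E0 by (intro divide_left_mono) (auto intro: mult_pos_pos)
      finally show ?thesis .
    qed
    have xs: "\<bar>x\<bar> \<le> s/32"
    proof -
      have al: "alpha > 0" by (rule alpha_pos)
      have "(32 powr (1/alpha)) powr alpha < s powr alpha"
        using sa al by (intro powr_less_mono2) auto
      moreover have "(32 powr (1/alpha)) powr alpha = 32" using al by (simp add: powr_powr)
      ultimately have sa32: "s powr alpha > 32" by simp
      have "s powr (1 - alpha) = s / s powr alpha" using s0' by (simp add: powr_diff)
      also have "\<dots> \<le> s / 32" using sa32 s0' by (intro divide_left_mono) auto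
      finally show ?thesis using xb by linarith
    qed
    show "\<bar>bin_interp (N s) (mu s) s x
             - ((1 / sqrt (2 * pi)) * exp (- x\<^sup>2 / 2) * (1 / s)
                - (1 / (6 * sqrt (2 * pi))) * x * (x\<^sup>2 - 3) * exp (- x\<^sup>2 / 2) * (1 / s\<^sup>2))\<bar>
           \<le> 2000000000 / s ^ 3"
      by (rule core[OF s50 mu(1) mu2 NNh xs])
  qed
  show ?thesis
    apply (rule exI[of _ "2000000000::real"])
    apply (rule conjI)
     apply simp
    apply (rule exI[of _ s0])
    using key by blast
qed


end
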